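(* Let $0<v_T<\tfrac12$, $V_u>0$, $g>0$ and $k\ge 0$ (real). Let $L_{g,k}$ be the line through the points $(V_u/(k+1),0)$ and $(0,-gV_u)$, i.e. the graph of $v\mapsto g(k+1)v-gV_u$. Then the central cell fires when $v_u$ is raised from $0$ to $V_u$ if and only if both of the following hold: (1) $L_{g,k}$ lies strictly below the critical segment, i.e. $g(k+1)v-gV_u<F(v)$ for all $v\in[v_{\min},v_i]$; and (2) the slope of $L_{g,k}$ is less than $F'(v_i)$, i.e. $g(k+1)<F'(v_i)$.
   Context: Fix $v_T\in(0,\tfrac12)$ and let $F(v)=v(v-v_T)(1-v)$. Then $F$ has a local minimum at a point $v_{\min}$, a local maximum at a point $v_{\max}$, and an inflection point at $v_i=(1+v_T)/3$, with $0<v_{\min}<v_T<v_i<v_{\max}<1$. The critical segment is the part of the graph of $F$ over $[v_{\min},v_i]$. Central-cell model: for parameters $g>0$ (gap-junction conductance), $k\ge 0$ (real; ratio of total downstream to upstream conductance) and upstream voltage $v_u$, the voltage $v$ of the central cell obeys $\frac{dv}{dt}=F(v)+g(v_u-v)-gkv$. Its equilibria are the solutions of $F(v)=g(k+1)v-gv_u$. Firing: given $V_u>0$, the central cell is said to fire when $v_u$ is raised from $0$ to $V_u$ if there is a threshold–rest collision at some $v_{u,c}\in(0,V_u)$, meaning: there exist $v_{u,c}\in(0,V_u)$ and $v^*\in(v_{\min},v_i)$ with $F(v^* )=g(k+1)v^*-gv_{u,c}$ and $F'(v^* )=g(k+1)$ (at $v_u=v_{u,c}$ the two smallest equilibria,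 rest and threshold, coalesce in a saddle-node bifurcation and disappear as $v_u$ increases further). *)

theory Defs
  imports "HOL-Analysis.Analysis"
begin

definition F :: "real \<Rightarrow> real \<Rightarrow> real" where
  "F vT v = v * (v - vT) * (1 - v)"

definition v_i :: "real \<Rightarrow> real" where
  "v_i vT = (1 + vT) / 3"

text \<open>Location of the local minimum of F: the smaller root of
  F'(v) = -3 v^2 + 2 (1 + vT) v - vT.\<close>
definition v_min :: "real \<Rightarrow> real" where
  "v_min vT = ((1 + vT) - sqrt ((1 + vT)^2 - 3 * vT)) / 3"

text \<open>Firing: a threshold-rest saddle-node collision at some v_{u,c} in (0, V_u).\<close>
definition fires :: "real \<Rightarrow> real \<Rightarrow> real \<Rightarrow> real \<Rightarrow> bool" where
  "fires vT g k Vu \<longleftrightarrow>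
     (\<exists>vuc \<in> {0<..<Vu}. \<exists>vs \<in> {v_min vT<..<v_i vT}.
        F vT vs = g * (k + 1) * vs - g * vuc \<and> deriv (F vT) vs = g * (k + 1))"

end

theory Submission
  imports Defs
begin

lemma derivF: "deriv (F vT) v = -3 * v^2 + 2*(1+vT) * v - vT"
proof -
  have "((\<lambda>v. F vT v) has_real_derivative (-3 * v^2 + 2*(1+vT) * v - vT)) (at v)"
    unfolding F_def by (auto intro!: derivative_eq_intros simp: power2_eq_square algebra_simps)
  then show ?thesis by (rule DERIV_imp_deriv)
qed

lemma a1: fixes vs vT s :: real assumes e2: "-3 * vs^2 + 2*(1+vT) * vs - vT = s"
 shows "((1+vT)^2 - 3 * vT)/3 - s = (vs - (1+vT)/3)^2 * 3" using e2[symmetric]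
 by (simp add: power2_eq_square field_simps)
lemma a2: fixes vs vT s v :: real assumes e2: "-3 * vs^2 + 2*(1+vT) * vs - vT = s"
 shows "(F vT v - s * v) - (F vT vs - s * vs) = (v-vs)^2 * ((1+vT) - 2 * vs - v)"
        unfolding F_def e2[symmetric] by (simp add: power2_eq_square algebra_simps)
lemma a3: fixes vs vT s :: real assumes e2: "-3 * vs^2 + 2*(1+vT) * vs - vT = s"
 shows "s * vs - F vT vs = vs^2 * ((1+vT) - 2 * vs)"
        unfolding F_def e2[symmetric] by (simp add: power2_eq_square algebra_simps)
lemma a4: fixes r vT s :: real assumes r2: "r^2 = ((1+vT)^2 - 3 * vT) - 3 * s"
 shows "-3 * (((1+vT) - r)/3)^2 + 2*(1+vT) * (((1+vT) - r)/3) - vT = s"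
 using r2 by (simp add: power2_eq_square field_simps)

theorem proposition2p1:
  fixes vT Vu g k :: real
  assumes "0 < vT" "vT < 1/2" "0 < Vu" "0 < g" "0 \<le> k"
  shows "fires vT g k Vu \<longleftrightarrow>
           ((\<forall>v \<in> {v_min vT..v_i vT}. g * (k + 1) * v - g * Vu < F vT v) \<and>
            g * (k + 1) < deriv (F vT) (v_i vT))"
proof
  define s where "s = g*(k+1)"
  have s0: "s > 0" using assms unfolding s_def by simp
  define D where "D = (1+vT)^2 - 3 * vT"
  have D0: "D > 0"
  proof -
    have "D = (vT - 1/2)^2 + 3/4" unfolding D_def by (simp add: power2_eq_square algebra_simps)
    moreover have "(vT - 1/2)^2 \<ge> 0" by simp
    ultimately show ?thesis by linarith
  qed
  have Fvi: "deriv (F vT) (v_i vT) = D/3" unfolding derivF v_i_def D_def by (simp add: power2_eq_square field_simps)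
  {
    assume "fires vT g k Vu"
    then obtain vuc vs where vuc: "0 < vuc" "vuc < Vu" and vs: "v_min vT < vs" "vs < v_i vT"
      and e1: "F vT vs = s * vs - g * vuc" and e2: "-3 * vs^2 + 2*(1+vT) * vs - vT = s"
      unfolding fires_def s_def derivF by auto
    have sD: "s < D/3"
    proof -
      have "D/3 - s = (vs - v_i vT)^2 * 3" using a1[OF e2] unfolding D_def v_i_def .
      moreover have "(vs - v_i vT)^2 > 0" using vs by simp
      ultimately show ?thesis by linarith
    qed
    have gv: "g * vuc < g * Vu" using vuc assms by simp
    have "\<forall>v \<in> {v_min vT..v_i vT}. s * v - g * Vu < F vT v"
    proof
      fix v assume v: "v \<in> {v_min vT..v_i vT}"
      have id: "(F vT v - s * v) - (F vT vs - s * vs) = (v-vs)^2 * ((1+vT) - 2 * vs - v)"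
        by (rule a2[OF e2])
      have "(1+vT) - 2 * vs - v > 0" using v vs unfolding v_i_def by auto
      hence "(v-vs)^2 * ((1+vT) - 2 * vs - v) \<ge> 0" by simp
      with id e1 gv show "s * v - g * Vu < F vT v" by linarith
    qed
    then show "(\<forall>v \<in> {v_min vT..v_i vT}. g * (k + 1) * v - g * Vu < F vT v) \<and>
            g * (k + 1) < deriv (F vT) (v_i vT)" using sD Fvi s_def by simp
  }
  {
    assume H: "(\<forall>v \<in> {v_min vT..v_i vT}. g * (k + 1) * v - g * Vu < F vT v) \<and>
            g * (k + 1) < deriv (F vT) (v_i vT)"
    hence H1: "\<forall>v \<in> {v_min vT..v_i vT}. s * v - g * Vu < F vT v" and sD: "s < D/3"
      using Fvi s_def by auto
    define r where "r = sqrt (D - 3 * s)"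
    have r0: "r > 0" unfolding r_def using sD by simp
    have rD: "r < sqrt D" unfolding r_def using s0 sD by simp
    have r2: "r^2 = D - 3 * s" unfolding r_def using sD by simp
    define vs where "vs = ((1+vT) - r)/3"
    have vs1: "v_min vT < vs" unfolding vs_def v_min_def using rD D_def by simp
    have vs2: "vs < v_i vT" unfolding vs_def v_i_def using r0 by simp
    have e2: "-3 * vs^2 + 2*(1+vT) * vs - vT = s" unfolding vs_def
      by (rule a4) (use r2 D_def in simp)
    define vuc where "vuc = (s * vs - F vT vs)/g"
    have e1: "F vT vs = s * vs - g * vuc" unfolding vuc_def using assms by simp
    have vmin0: "v_min vT > 0"
    proof -
      have "sqrt D < sqrt ((1+vT)^2)" unfolding D_def using assms by (intro real_sqrt_less_mono) simp
      thus ?thesis unfolding v_min_def D_def[symmetric] using assms by simp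
    qed
    have "s * vs - F vT vs = vs^2 * ((1+vT) - 2 * vs)" by (rule a3[OF e2])
    moreover have "vs^2 * ((1+vT) - 2 * vs) > 0" using vs1 vs2 vmin0 unfolding v_i_def by simp
    ultimately have vuc0: "vuc > 0" unfolding vuc_def using assms by simp
    have "s * vs - g * Vu < F vT vs" using H1 vs1 vs2 by auto
    hence "g * vuc < g * Vu" using e1 by linarith
    hence vuc1: "vuc < Vu" using assms by simp
    have "vuc \<in> {0<..<Vu}" "vs \<in> {v_min vT<..<v_i vT}" using vuc0 vuc1 vs1 vs2 by auto
    moreover have "F vT vs = g * (k + 1) * vs - g * vuc \<and> deriv (F vT) vs = g * (k + 1)"
      using e1 e2 unfolding s_def derivF by simp
    ultimately show "fires vT g k Vu" unfolding fires_def by blast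
  }
qed

end
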